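(* Let $G=(N,A)$ be an $s$-$t$ DAG (parallel arcs allowed) and let $uv,xy\in A$. If $uv$ is the immediate $s$-dominator of $xy$, then the immediate $t$-dominator of $uv$ $t$-dominates $xy$.
   Context: An $s$-$t$ DAG is a directed acyclic multigraph with a unique source $s$ and a unique sink $t$ such that every node is reachable from $s$ and every node reaches $t$. An arc $ab$ $s$-dominates an arc $cd$ if $ab=cd$ or every $s$-$c$ path contains $ab$; $ab$ $t$-dominates $cd$ if $ab=cd$ or every $d$-$t$ path contains $ab$; strict domination additionally requires $ab\neq cd$. The immediate $s$-dominator of an arc $cd$ is the strict $s$-dominator of $cd$ that is $s$-dominated by all strict $s$-dominators of $cd$; immediate $t$-dominators are defined symmetrically. The arc dominator trees have an abstract root (corresponding to $s$, resp. $t$): if an arc has no strict $t$-dominator, its immediate $t$-dominator is this abstract root, which by convention $t$-dominates every arc. *)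

theory Defs
  imports "Graph_Theory.Digraph" "Graph_Theory.Arc_Walk"
begin

definition st_dag :: "('a,'b) pre_digraph \<Rightarrow> 'a \<Rightarrow> 'a \<Rightarrow> bool" where
  "st_dag G s t \<longleftrightarrow>
     fin_digraph G \<and>
     (\<forall>u p. pre_digraph.awalk G u p u \<longrightarrow> p = []) \<and>
     s \<in> verts G \<and> t \<in> verts G \<and>
     in_arcs G s = {} \<and> (\<forall>v\<in>verts G. in_arcs G v = {} \<longrightarrow> v = s) \<and>
     out_arcs G t = {} \<and> (\<forall>v\<in>verts G. out_arcs G v = {} \<longrightarrow> v = t) \<and>
     (\<forall>v\<in>verts G. reachable G s v \<and> reachable G v t)"

definition sdom :: "('a,'b) pre_digraph \<Rightarrow> 'a \<Rightarrow> 'b \<Rightarrow> 'b \<Rightarrow> bool" where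
  "sdom G s ab cd \<longleftrightarrow> ab = cd \<or>
     (\<forall>p. pre_digraph.awalk G s p (tail G cd) \<longrightarrow> ab \<in> set p)"

definition tdom :: "('a,'b) pre_digraph \<Rightarrow> 'a \<Rightarrow> 'b \<Rightarrow> 'b \<Rightarrow> bool" where
  "tdom G t ab cd \<longleftrightarrow> ab = cd \<or>
     (\<forall>p. pre_digraph.awalk G (head G cd) p t \<longrightarrow> ab \<in> set p)"

definition strict_sdom :: "('a,'b) pre_digraph \<Rightarrow> 'a \<Rightarrow> 'b \<Rightarrow> 'b \<Rightarrow> bool" where
  "strict_sdom G s ab cd \<longleftrightarrow> sdom G s ab cd \<and> ab \<noteq> cd"

definition strict_tdom :: "('a,'b) pre_digraph \<Rightarrow> 'a \<Rightarrow> 'b \<Rightarrow> 'b \<Rightarrow> bool" where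
  "strict_tdom G t ab cd \<longleftrightarrow> tdom G t ab cd \<and> ab \<noteq> cd"

text \<open>Arc dominator tree nodes: None is the abstract root, Some e is an arc.
The abstract root dominates every arc.\<close>
definition sdom_node :: "('a,'b) pre_digraph \<Rightarrow> 'a \<Rightarrow> 'b option \<Rightarrow> 'b \<Rightarrow> bool" where
  "sdom_node G s w cd \<longleftrightarrow> (case w of None \<Rightarrow> True | Some ab \<Rightarrow> sdom G s ab cd)"

definition tdom_node :: "('a,'b) pre_digraph \<Rightarrow> 'a \<Rightarrow> 'b option \<Rightarrow> 'b \<Rightarrow> bool" where
  "tdom_node G t w cd \<longleftrightarrow> (case w of None \<Rightarrow> True | Some ab \<Rightarrow> tdom G t ab cd)"

definition is_imm_sdom :: "('a,'b) pre_digraph \<Rightarrow> 'a \<Rightarrow> 'b option \<Rightarrow> 'b \<Rightarrow> bool" where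
  "is_imm_sdom G s w cd \<longleftrightarrow>
     (case w of
        None \<Rightarrow> \<not> (\<exists>e\<in>arcs G. strict_sdom G s e cd)
      | Some ab \<Rightarrow> ab \<in> arcs G \<and> strict_sdom G s ab cd \<and>
                   (\<forall>e\<in>arcs G. strict_sdom G s e cd \<longrightarrow> sdom G s e ab))"

definition is_imm_tdom :: "('a,'b) pre_digraph \<Rightarrow> 'a \<Rightarrow> 'b option \<Rightarrow> 'b \<Rightarrow> bool" where
  "is_imm_tdom G t w cd \<longleftrightarrow>
     (case w of
        None \<Rightarrow> \<not> (\<exists>e\<in>arcs G. strict_tdom G t e cd)
      | Some ab \<Rightarrow> ab \<in> arcs G \<and> strict_tdom G t ab cd \<and>
                   (\<forall>e\<in>arcs G. strict_tdom G t e cd \<longrightarrow> tdom G t e ab))"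

end

theory Submission
  imports Defs
begin

context wf_digraph begin

lemma split_arc:
  assumes "awalk a p b" "e \<in> set p"
  shows "\<exists>p1 p2. p = p1 @ e # p2 \<and> awalk a p1 (tail G e) \<and> awalk (head G e) p2 b"
proof -
  obtain p1 p2 where pe: "p = p1 @ e # p2" using assms(2) by (metis in_set_conv_decomp)
  then show ?thesis using assms(1) by (auto simp: awalk_Cons_iff) blast
qed

end

theorem lemma7:
  fixes G :: "('a,'b) pre_digraph" and s t :: 'a and uv xy :: 'b
  assumes "st_dag G s t"
    and "uv \<in> arcs G" and "xy \<in> arcs G"
    and "is_imm_sdom G s (Some uv) xy"
  shows "\<forall>w. is_imm_tdom G t w uv \<longrightarrow> tdom_node G t w xy"
proof (intro allI impI)
  fix w assume w: "is_imm_tdom G t w uv"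
  show "tdom_node G t w xy"
  proof (cases w)
    case None then show ?thesis by (simp add: tdom_node_def)
  next
    case (Some ab)
    interpret wf_digraph G using assms(1) unfolding st_dag_def fin_digraph_def by blast
    have acyc: "\<And>u p. awalk u p u \<Longrightarrow> p = []" using assms(1) unfolding st_dag_def by blast
    have ab: "ab \<in> arcs G" "tdom G t ab uv" "ab \<noteq> uv"
      using w Some by (auto simp: is_imm_tdom_def strict_tdom_def)
    have uvs: "sdom G s uv xy" "uv \<noteq> xy"
      and imm: "\<forall>e\<in>arcs G. strict_sdom G s e xy \<longrightarrow> sdom G s e uv"
      using assms(4) by (auto simp: is_imm_sdom_def strict_sdom_def)
    have uvall: "\<And>p. awalk s p (tail G xy) \<Longrightarrow> uv \<in> set p"
      using uvs unfolding sdom_def by blast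
    have aball: "\<And>p. awalk (head G uv) p t \<Longrightarrow> ab \<in> set p"
      using ab unfolding tdom_def by blast
    have "tdom G t ab xy"
    proof (rule ccontr)
      assume nt: "\<not> tdom G t ab xy"
      then obtain P where P: "awalk (head G xy) P t" "ab \<notin> set P" and abxy: "ab \<noteq> xy"
        unfolding tdom_def by blast
      have C: "\<exists>p1 p2. p = p1 @ uv # p2 \<and> awalk s p1 (tail G uv) \<and> awalk (head G uv) p2 (tail G xy) \<and> ab \<in> set p2"
        if p: "awalk s p (tail G xy)" for p
      proof -
        obtain p1 p2 where sp: "p = p1 @ uv # p2" "awalk s p1 (tail G uv)" "awalk (head G uv) p2 (tail G xy)"
          using split_arc[OF p uvall[OF p]] by blast
        have "awalk (head G uv) (p2 @ xy # P) t"
          using sp(3) P(1) assms(3) by (auto simp: awalk_Cons_iff)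
        then have "ab \<in> set (p2 @ xy # P)" by (rule aball)
        then have "ab \<in> set p2" using P(2) abxy by auto
        then show ?thesis using sp by blast
      qed
      have "sdom G s ab xy" unfolding sdom_def using C by fastforce
      then have "sdom G s ab uv" using imm ab(1) abxy by (auto simp: strict_sdom_def)
      then have abu: "\<And>p. awalk s p (tail G uv) \<Longrightarrow> ab \<in> set p"
        using ab(3) unfolding sdom_def by blast
      have "tail G xy \<in> verts G" using assms(3) by simp
      then have "reachable G s (tail G xy)" using assms(1) unfolding st_dag_def by blast
      then obtain p where p: "awalk s p (tail G xy)" by (auto simp: reachable_awalk)
      obtain p1 p2 where q: "awalk s p1 (tail G uv)" "awalk (head G uv) p2 (tail G xy)" "ab \<in> set p2"
        using C[OF p] by blast
      obtain q1 q2 where q12: "awalk s q1 (tail G ab)" "awalk (head G ab) q2 (tail G uv)"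
        using split_arc[OF q(1) abu[OF q(1)]] by blast
      obtain r1 r2 where r12: "awalk (head G uv) r1 (tail G ab)" "awalk (head G ab) r2 (tail G xy)"
        using split_arc[OF q(2) q(3)] by blast
      have "awalk (head G ab) (q2 @ uv # r1 @ [ab]) (head G ab)"
        using q12(2) r12(1) assms(2) ab(1) by (auto simp: awalk_Cons_iff awalk_Nil_iff)
      then show False using acyc by blast
    qed
    then show ?thesis using Some by (simp add: tdom_node_def)
  qed
qed

end
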